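(* Let $a\neq 0$ be a constant. Then there exists an analytic germ $u=u(t)$ at $t=0$ with $u(0)=a$ satisfying the differential equation $$t\,\Big(\frac{du}{dt}\Big)^2+u\,\frac{du}{dt}-\frac12=0 .$$ For any such $u$, define $$f(x,y)=\frac{x^3}{6}+y+x\,u(xy),\qquad g(x,y)=\frac{x^3}{6}+y-x\,u(xy),$$ and let $W_u$ be the planar 4-web whose foliations are the level sets of $x$, $y$, $f$, $g$. Then: (i) the cross-ratio of the four tangent lines to the foliations of $W_u$ is equal to $-1$ at every point (i.e. $\frac{\partial f}{\partial x}\frac{\partial g}{\partial y}+\frac{\partial g}{\partial x}\frac{\partial f}{\partial y}=0$); (ii) no 3-subweb of $W_u$ is hexagonal (the 3-subweb $(x,y,f)$ has nonzero Blaschke curvature at the origin); (iii) $W_u$ has the nontrivial abelian relation $\frac{x^3}{3}+2y-f-g\equiv 0$. Consequently $W_u$ is a Nakai web of rank exactly $1$. *)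

theory Defs
  imports "HOL-Analysis.Analysis"
begin

definition real_analytic_at :: "(real \<Rightarrow> real) \<Rightarrow> real \<Rightarrow> bool" where
  "real_analytic_at u t0 \<longleftrightarrow>
     (\<exists>r>0. \<exists>c::nat \<Rightarrow> real. \<forall>t. \<bar>t - t0\<bar> < r \<longrightarrow> (\<lambda>n. c n * (t - t0) ^ n) sums u t)"

definition Dx :: "(real \<times> real \<Rightarrow> real) \<Rightarrow> real \<times> real \<Rightarrow> real" where
  "Dx F p = deriv (\<lambda>s. F (s, snd p)) (fst p)"

definition Dy :: "(real \<times> real \<Rightarrow> real) \<Rightarrow> real \<times> real \<Rightarrow> real" where
  "Dy F p = deriv (\<lambda>s. F (fst p, s)) (snd p)"

definition web_f :: "(real \<Rightarrow> real) \<Rightarrow> real \<times> real \<Rightarrow> real" where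
  "web_f u p = (fst p) ^ 3 / 6 + snd p + fst p * u (fst p * snd p)"

definition web_g :: "(real \<Rightarrow> real) \<Rightarrow> real \<times> real \<Rightarrow> real" where
  "web_g u p = (fst p) ^ 3 / 6 + snd p - fst p * u (fst p * snd p)"

text \<open>With \<open>du_i = a_i dx + b_i dy\<close> and \<open>[jk] = a_j b_k - a_k b_j\<close>, the normalized
  forms \<open>\<omega>_i = [jk] du_i\<close> satisfy \<open>\<omega>_1 + \<omega>_2 + \<omega>_3 = 0\<close>; the connection form \<open>\<gamma>\<close> with
  \<open>d\<omega>_i = \<gamma> \<and> \<omega>_i\<close> is \<open>\<gamma> = d log [23] + \<alpha> du_1\<close> where \<open>\<alpha> = (\<theta> \<and> du_2)/(du_1 \<and> du_2)\<close>,
  \<open>\<theta> = d log([31]/[23])\<close>; the curvature is \<open>d\<gamma> = d\<alpha> \<and> du_1\<close>, given here by its coefficient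
  with respect to \<open>dx \<and> dy\<close>.  For the web \<open>(x, y, h)\<close> it equals
  \<open>\<partial>\<^sub>x\<partial>\<^sub>y log(h_x/h_y)\<close>.\<close>
definition bracket :: "(real \<times> real \<Rightarrow> real) \<Rightarrow> (real \<times> real \<Rightarrow> real) \<Rightarrow> real \<times> real \<Rightarrow> real" where
  "bracket v w p = Dx v p * Dy w p - Dx w p * Dy v p"

definition blaschke_alpha ::
  "(real \<times> real \<Rightarrow> real) \<Rightarrow> (real \<times> real \<Rightarrow> real) \<Rightarrow> (real \<times> real \<Rightarrow> real) \<Rightarrow> real \<times> real \<Rightarrow> real" where
  "blaschke_alpha u1 u2 u3 p =
     (let R = (\<lambda>q. bracket u3 u1 q / bracket u2 u3 q);
          \<theta>x = Dx R p / R p; \<theta>y = Dy R p / R p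
      in (\<theta>x * Dy u2 p - \<theta>y * Dx u2 p) / bracket u1 u2 p)"

definition blaschke_curvature ::
  "(real \<times> real \<Rightarrow> real) \<Rightarrow> (real \<times> real \<Rightarrow> real) \<Rightarrow> (real \<times> real \<Rightarrow> real) \<Rightarrow> real \<times> real \<Rightarrow> real" where
  "blaschke_curvature u1 u2 u3 p =
     Dx (blaschke_alpha u1 u2 u3) p * Dy u1 p - Dy (blaschke_alpha u1 u2 u3) p * Dx u1 p"

definition hexagonal_at ::
  "(real \<times> real \<Rightarrow> real) \<Rightarrow> (real \<times> real \<Rightarrow> real) \<Rightarrow> (real \<times> real \<Rightarrow> real) \<Rightarrow> real \<times> real \<Rightarrow> bool" where
  "hexagonal_at u1 u2 u3 p \<longleftrightarrow> (\<forall>\<^sub>F q in nhds p. blaschke_curvature u1 u2 u3 q = 0)"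

text \<open>Abelian relations of the 4-web with first integrals \<open>u1..u4\<close> (all vanishing at the
  base point \<open>p\<close>), normalized modulo constants by \<open>\<phi>_i(0) = 0\<close>.\<close>
definition abelian_relation ::
  "(real \<times> real \<Rightarrow> real) list \<Rightarrow> (real \<Rightarrow> real) list \<Rightarrow> real \<times> real \<Rightarrow> bool" where
  "abelian_relation us \<phi>s p \<longleftrightarrow> length \<phi>s = length us \<and>
     (\<forall>i < length us. real_analytic_at (\<phi>s ! i) ((us ! i) p) \<and> (\<phi>s ! i) ((us ! i) p) = 0) \<and>
     (\<forall>\<^sub>F q in nhds p. (\<Sum>i < length us. (\<phi>s ! i) ((us ! i) q)) = 0)"

definition trivial_relation ::
  "(real \<times> real \<Rightarrow> real) list \<Rightarrow> (real \<Rightarrow> real) list \<Rightarrow> real \<times> real \<Rightarrow> bool" where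
  "trivial_relation us \<phi>s p \<longleftrightarrow>
     (\<forall>i < length us. \<forall>\<^sub>F s in nhds ((us ! i) p). (\<phi>s ! i) s = 0)"

definition web_rank_one :: "(real \<times> real \<Rightarrow> real) list \<Rightarrow> real \<times> real \<Rightarrow> bool" where
  "web_rank_one us p \<longleftrightarrow>
     (\<exists>\<psi>s. abelian_relation us \<psi>s p \<and> \<not> trivial_relation us \<psi>s p \<and>
        (\<forall>\<phi>s. abelian_relation us \<phi>s p \<longrightarrow>
           (\<exists>c::real. \<forall>i < length us. \<forall>\<^sub>F s in nhds ((us ! i) p). (\<phi>s ! i) s = c * (\<psi>s ! i) s)))"

end

theory Submission
  imports Defs "HOL-Complex_Analysis.Complex_Analysis"
begin


lemma analytic_smooth:
  assumes "real_analytic_at u 0"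
  shows "\<exists>r>0. \<forall>n t. \<bar>t\<bar> < r \<longrightarrow> ((deriv^^n) u has_real_derivative (deriv^^(Suc n)) u t) (at t)"
proof -
  obtain r c where r: "r > 0" and c: "\<And>t. \<bar>t\<bar> < r \<Longrightarrow> (\<lambda>n. c n * t ^ n) sums u t"
    using assms unfolding real_analytic_at_def by auto
  define S where "S k t = (\<Sum>m. (diffs^^k) c m * t^m)" for k t
  have sm: "\<And>t. \<bar>t\<bar> < r \<Longrightarrow> summable (\<lambda>m. (diffs^^k) c m * t^m)" for k
  proof (induction k)
    case 0 then show ?case using c sums_summable by fastforce
  next
    case (Suc k) then show ?case
      using termdiff_converges[of _ r "(diffs^^k) c"] by auto
  qed
  have d: "\<bar>t\<bar> < r \<Longrightarrow> (S k has_real_derivative S (Suc k) t) (at t)" for k t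
    unfolding S_def using termdiffs_strong'[of r "(diffs^^k) c" t] sm by auto
  have eq: "\<forall>t. \<bar>t\<bar> < r \<longrightarrow> (deriv^^k) u t = S k t" for k
  proof (induction k)
    case 0 then show ?case using c sums_unique unfolding S_def by fastforce
  next
    case (Suc k)
    show ?case
    proof (intro allI impI)
      fix t :: real assume t: "\<bar>t\<bar> < r"
      have "((deriv^^k) u has_real_derivative S (Suc k) t) (at t)"
        apply (rule has_field_derivative_transform_within_open[where f="S k" and S="{-r<..<r}"])
        using d[OF t] Suc t by auto
      then show "(deriv^^Suc k) u t = S (Suc k) t" by (simp add: DERIV_imp_deriv)
    qed
  qed
  show ?thesis
  proof (intro exI[of _ r] conjI allI impI r)
    fix n t assume t: "\<bar>t::real\<bar> < r"
    have "((deriv^^n) u has_real_derivative S (Suc n) t) (at t)"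
      apply (rule has_field_derivative_transform_within_open[where f="S n" and S="{-r<..<r}"])
      using d[OF t] eq t by auto
    then show "((deriv^^n) u has_real_derivative (deriv^^(Suc n)) u t) (at t)"
      using eq[of "Suc n"] t by simp
  qed
qed


lemma l1: "(x::'a::field) * y = 1 \<Longrightarrow> y = 1 / x"
  by (auto simp: eq_divide_eq mult.commute)
lemma l2: "s ^ 4 - s = (of_real c::complex) \<Longrightarrow> (cnj s) ^ 4 - cnj s = s ^ 4 - s"
proof -
  assume h: "s ^ 4 - s = (of_real c::complex)"
  have "cnj (s ^ 4 - s) = s ^ 4 - s" unfolding h by simp
  then show ?thesis by simp
qed
lemma l3: "cnj s = s \<Longrightarrow> s = of_real (Re s)"
  by (simp add: complex_eq_iff)
lemma l4: "(g::complex) = of_real s \<Longrightarrow> of_real (2*a/3) * g ^ 2 + of_real a / (3*g) = of_real (2 * a / 3 * s ^ 2 + a / (3 * s))"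
  by simp
lemma rmul: "Re (z * complex_of_real r) = Re z * r" by simp
lemma l7: "Re (1/(4 * (of_real s :: complex) ^ 3 - 1) * of_real l) = l/(4 * s ^ 3-1)"
  by (simp flip: of_real_power)
lemma l5: assumes "4 * (of_real s :: complex) ^ 3 - 1 \<noteq> 0" shows "4 * s ^ 3 - 1 \<noteq> (0::real)"
proof
  assume "4 * s ^ 3 - 1 = 0"
  then have "(of_real (4 * s ^ 3 - 1)::complex) = 0" by simp
  then show False using assms by simp
qed
lemma l6: assumes A: "(of_real s::complex) ^ 4 - of_real s = of_real (l*t)" shows "s ^ 4 - s = l*t"
proof -
  have "(of_real (s ^ 4 - s)::complex) = of_real (l*t)" using A by simp
  then show ?thesis by (simp only: of_real_eq_iff)
qed
lemma l8a: "(s::real) \<noteq> 0 \<Longrightarrow> D \<noteq> 0 \<Longrightarrow> D = 4 * s ^ 3 - 1 \<Longrightarrow> a \<noteq> 0 \<Longrightarrow>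
  2*a/3 * (2 * s * ((3 / (2 * a ^ 2)) / D)) - a * (3 * ((3 / (2 * a ^ 2)) / D)) / (3 * s) ^ 2 = 1 / (2 * a * s ^ 2)"
  apply (simp add: field_simps)
  apply algebra
  done
lemma l8: "(s::real) \<noteq> 0 \<Longrightarrow> 4 * s ^ 3 - 1 \<noteq> 0 \<Longrightarrow> a \<noteq> 0 \<Longrightarrow>
  2*a/3 * (2 * s * ((3 / (2 * a ^ 2)) / (4 * s ^ 3 - 1))) - a * (3 * ((3 / (2 * a ^ 2)) / (4 * s ^ 3 - 1))) / (3 * s) ^ 2 = 1 / (2 * a * s ^ 2)"
  using l8a by blast
lemma l9: "(s::real) \<noteq> 0 \<Longrightarrow> a \<noteq> 0 \<Longrightarrow>
  ((s ^ 4 - s) / (3 / (2 * a ^ 2))) * (1 / (2 * a * s ^ 2))\<^sup>2 + (2*a/3 * s ^ 2 + a / (3 * s)) * (1 / (2 * a * s ^ 2)) - 1/2 = 0"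
  apply (simp add: field_simps)
  apply (simp add: algebra_simps power2_eq_square power3_eq_cube power4_eq_xxxx)
  done

lemma l9': assumes "(s::real) \<noteq> 0" "a \<noteq> 0" "s ^ 4 - s = (3 / (2 * a ^ 2)) * t"
  shows "t * (1 / (2 * a * s ^ 2))\<^sup>2 + (2*a/3 * s ^ 2 + a / (3 * s)) * (1 / (2 * a * s ^ 2)) - 1/2 = 0"
proof -
  have "t = (s ^ 4 - s) / (3 / (2 * a ^ 2))" using assms(2,3) by (simp add: field_simps)
  then show ?thesis using l9[OF assms(1,2)] by (simp only:)
qed

lemma exists_solution:
  fixes a :: real
  assumes a: "a \<noteq> 0"
  shows "\<exists>u. real_analytic_at u 0 \<and> u 0 = a \<and>
            (\<forall>\<^sub>F t in nhds 0. t * (deriv u t)\<^sup>2 + u t * deriv u t - 1 / 2 = 0)"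
proof -
  define h :: "complex \<Rightarrow> complex" where "h z = z^4 - z" for z
  define lam :: real where "lam = 3 / (2 * a^2)"
  have lam: "lam > 0" using a by (simp add: lam_def)
  have hd: "(h has_field_derivative (4 * z^3 - 1)) (at z)" for z
    unfolding h_def by (auto intro!: derivative_eq_intros)
  have dh: "deriv h z = 4 * z^3 - 1" for z using hd DERIV_imp_deriv by blast
  have holh: "h holomorphic_on ball 1 (1/2)"
    unfolding h_def by (intro holomorphic_intros)
  have c1: "(1::complex) \<in> ball 1 (1/2)" by simp
  have dh1: "deriv h 1 \<noteq> 0" by (simp add: dh)
  obtain r where r: "r > 0" "ball (1::complex) r \<subseteq> ball 1 (1/2)" "open (h ` ball 1 r)" "inj_on h (ball 1 r)"
    using has_complex_derivative_locally_invertible[OF holh c1 open_ball dh1] by blast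
  define B where "B = ball (1::complex) r"
  have holhB: "h holomorphic_on B" using holh r(2) B_def holomorphic_on_subset by blast
  obtain g where g: "g holomorphic_on (h ` B)" "\<And>z. z \<in> B \<Longrightarrow> deriv h z * deriv g (h z) = 1"
      "\<And>z. z \<in> B \<Longrightarrow> g (h z) = z"
    using holomorphic_has_inverse[OF holhB _ r(4)[folded B_def]] B_def by auto
  define T where "T = h ` B"
  have oT: "open T" using r(3) B_def T_def by simp
  have h1: "h 1 = 0" by (simp add: h_def)
  have "1 \<in> B" using r(1) B_def by simp
  then have "h 1 \<in> T" unfolding T_def by blast
  then have "0 \<in> T" using h1 by simp
  then obtain e where e: "e > 0" "ball 0 e \<subseteq> T" using oT openE by blast
  have gT: "w \<in> T \<Longrightarrow> g w \<in> B \<and> h (g w) = w" for w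
    unfolding T_def using g(3) by auto
  have gd: "w \<in> T \<Longrightarrow> (g has_field_derivative 1 / (4 * (g w)^3 - 1)) (at w)" for w
  proof -
    assume w: "w \<in> T"
    have "deriv h (g w) * deriv g w = 1" using g(2)[of "g w"] gT[OF w] by simp
    then have "deriv g w = 1 / (4 * (g w)^3 - 1)" using l1[of "deriv h (g w)" "deriv g w"] dh by simp
    then show ?thesis using holomorphic_derivI[OF g(1)[folded T_def] oT w] by simp
  qed
  have Bnz: "z \<noteq> 0" if "z \<in> B" for z
  proof -
    have "z \<in> ball 1 (1/2)" using that r(2) B_def by blast
    then show ?thesis by (auto simp: dist_norm)
  qed
  have hdnz: "z \<in> B \<Longrightarrow> 4 * z^3 - 1 \<noteq> 0" for z
    using g(2)[of z] dh by auto
  define \<rho> where "\<rho> = e / lam"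
  have rho: "\<rho> > 0" using e lam by (simp add: \<rho>_def)
  have inT: "cmod \<tau> < \<rho> \<Longrightarrow> of_real lam * \<tau> \<in> T" for \<tau>
    using e lam by (intro subsetD[OF e(2)]) (auto simp: \<rho>_def norm_mult field_simps)
  define G where "G \<tau> = g (of_real lam * \<tau>)" for \<tau>
  have gl: "(G has_field_derivative (1 / (4 * (G \<tau>)^3 - 1)) * of_real lam) (at \<tau>)"
    if "of_real lam * \<tau> \<in> T" for \<tau>
  proof -
    have lin: "((\<lambda>\<tau>. of_real lam * \<tau>) has_field_derivative of_real lam) (at \<tau>)"
      by (auto intro!: derivative_eq_intros)
    show ?thesis unfolding G_def
      using DERIV_chain2[where g="\<lambda>\<tau>. of_real lam * \<tau>" and x=\<tau>, OF gd[OF that] lin] by simp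
  qed
  have Gnz: "G \<tau> \<noteq> 0" if "of_real lam * \<tau> \<in> T" for \<tau>
    using Bnz gT[OF that] unfolding G_def by blast
  define U where "U \<tau> = of_real (2*a/3) * (G \<tau>)^2 + of_real a / (3 * G \<tau>)" for \<tau>
  have holU: "U holomorphic_on ball 0 \<rho>"
  proof (subst holomorphic_on_open, simp, intro ballI)
    fix \<tau> :: complex assume "\<tau> \<in> ball 0 \<rho>"
    then have t: "of_real lam * \<tau> \<in> T" using inT by simp
    show "\<exists>f'. (U has_field_derivative f') (at \<tau>)"
      unfolding U_def using Gnz[OF t]
      by (intro exI) (auto intro!: derivative_eq_intros gl[OF t])
  qed
  have real_g: "\<bar>t\<bar> < \<rho> \<Longrightarrow> g (of_real (lam * t)) = of_real (Re (g (of_real (lam * t))))" for t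
  proof -
    assume t: "\<bar>t\<bar> < \<rho>"
    have w: "of_real (lam * t) \<in> T" using inT[of "of_real t"] t by simp
    define s where "s = g (of_real (lam * t))"
    have sB: "s \<in> B" and hs: "h s = of_real (lam * t)" using gT[OF w] s_def by auto
    have "cmod (1 - cnj s) = cmod (1 - s)" by (metis complex_cnj_diff complex_cnj_one complex_mod_cnj)
    then have "cnj s \<in> B" using sB unfolding B_def by (simp add: dist_norm)
    moreover have "h (cnj s) = h s" using hs l2[of s "lam * t"] unfolding h_def by simp
    ultimately have "cnj s = s" using r(4) sB unfolding B_def inj_on_def by blast
    then show ?thesis unfolding s_def[symmetric] using l3 by blast
  qed
  define sr where "sr t = Re (g (of_real (lam * t)))" for t
  define u where "u t = 2*a/3 * (sr t)^2 + a / (3 * sr t)" for t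
  have Uu: "\<bar>t\<bar> < \<rho> \<Longrightarrow> Re (U (of_real t)) = u t" for t
  proof -
    assume t: "\<bar>t\<bar> < \<rho>"
    have "G (of_real t) = of_real (sr t)" using real_g[OF t] unfolding G_def sr_def by simp
    then have "U (of_real t) = of_real (u t)"
      unfolding U_def u_def using l4 by simp
    then show ?thesis by simp
  qed
  have analytic: "real_analytic_at u 0"
    unfolding real_analytic_at_def
  proof (intro exI[of _ \<rho>] conjI rho exI[of _ "\<lambda>n. Re ((deriv ^^ n) U 0 / fact n)"] allI impI)
    fix t :: real assume t: "\<bar>t - 0\<bar> < \<rho>"
    have "(\<lambda>n. (deriv ^^ n) U 0 / fact n * (of_real t - 0)^n) sums U (of_real t)"
      using holomorphic_power_series[OF holU, of "of_real t"] t by simp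
    then have "(\<lambda>n. Re ((deriv ^^ n) U 0 / fact n * (of_real t - 0)^n)) sums Re (U (of_real t))"
      using sums_complex_iff[THEN iffD1] by blast
    moreover have "Re ((deriv ^^ n) U 0 / fact n * (of_real t - 0)^n) = Re ((deriv ^^ n) U 0 / fact n) * (t - 0)^n" for n
      by (simp only: diff_zero of_real_power[symmetric] rmul)
    ultimately show "(\<lambda>n. Re ((deriv ^^ n) U 0 / fact n) * (t - 0) ^ n) sums u t"
      using Uu t by simp
  qed
  have s0: "sr 0 = 1" unfolding sr_def using g(3)[of 1] h1 r(1) B_def by simp
  have u0: "u 0 = a" unfolding u_def s0 by simp
  have ode: "t * (deriv u t)\<^sup>2 + u t * deriv u t - 1 / 2 = 0" if t: "\<bar>t\<bar> < \<rho>" for t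
  proof -
    have w: "of_real (lam * t) \<in> T" using inT[of "of_real t"] t by simp
    have gs: "g (of_real (lam * t)) = of_real (sr t)" using real_g[OF t] sr_def by simp
    have sB: "of_real (sr t) \<in> B" and hs: "h (of_real (sr t)) = of_real (lam * t)"
      using gT[OF w] gs by auto
    have snz: "sr t \<noteq> 0" using Bnz[OF sB] by simp
    have d3: "4 * (sr t)^3 - 1 \<noteq> 0" using hdnz[OF sB] l5 by blast
    have heq: "(sr t)^4 - sr t = lam * t" using hs l6 unfolding h_def by blast
    have w': "of_real lam * of_real t \<in> T" using w by simp
    have Gs: "G (of_real t) = of_real (sr t)" using gs unfolding G_def by simp
    have "((\<lambda>x. G (of_real x)) has_vector_derivative (1 / (4 * (G (of_real t))^3 - 1)) * of_real lam) (at t)"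
      using has_vector_derivative_real_field[OF gl[OF w']] by blast
    then have "((\<lambda>x. Re (G (of_real x))) has_real_derivative Re ((1 / (4 * (G (of_real t))^3 - 1)) * of_real lam)) (at t)"
      by (rule has_field_derivative_Re)
    moreover have "(\<lambda>x. Re (G (of_real x))) = sr" unfolding G_def sr_def by (simp add: fun_eq_iff)
    ultimately have "(sr has_real_derivative Re ((1 / (4 * (G (of_real t))^3 - 1)) * of_real lam)) (at t)"
      by simp
    then have srd: "(sr has_real_derivative lam / (4 * (sr t)^3 - 1)) (at t)"
      unfolding Gs l7 .
    have "(u has_real_derivative 2*a/3 * (2 * sr t * (lam / (4 * (sr t)^3 - 1)))
          - a * (3 * (lam / (4 * (sr t)^3 - 1))) / (3 * sr t)^2) (at t)"
    proof -
      have n1: "36 * sr t ^ 3 - 9 \<noteq> 0" "12 * sr t ^ 3 - 3 \<noteq> 0" using d3 by auto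
      have eq: "12 * (lam * (sr t * a)) / (36 * sr t ^ 3 - 9) = 4 * (a * (sr t * lam)) / (12 * sr t ^ 3 - 3)"
        using n1 by (simp add: field_simps)
      show ?thesis
      unfolding u_def[abs_def] using snz
      by (auto intro!: derivative_eq_intros srd simp: power2_eq_square eq)
    qed
    then have "deriv u t = 2*a/3 * (2 * sr t * (lam / (4 * (sr t)^3 - 1)))
          - a * (3 * (lam / (4 * (sr t)^3 - 1))) / (3 * sr t)^2" by (rule DERIV_imp_deriv)
    also have "\<dots> = 1 / (2 * a * (sr t)^2)"
      using snz d3 a l8 unfolding lam_def by blast
    finally have du: "deriv u t = 1 / (2 * a * (sr t)^2)" .
    show ?thesis unfolding du u_def using l9'[OF snz a] heq lam_def by simp
  qed
  have "\<forall>\<^sub>F t in nhds 0. t * (deriv u t)\<^sup>2 + u t * deriv u t - 1 / 2 = 0"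
    unfolding eventually_nhds_metric using rho ode by (auto simp: dist_real_def)
  then show ?thesis using analytic u0 by blast
qed


lemma deriv_loc:
  assumes "(K has_real_derivative D) (at x)" "d > 0" "\<And>y. \<bar>y - x\<bar> < d \<Longrightarrow> F y = K y"
  shows "deriv F x = D"
proof -
  have "eventually (\<lambda>y. F y = K y) (nhds x)"
    unfolding eventually_nhds_metric using assms(2,3) by (auto simp: dist_real_def)
  then have "deriv F x = deriv K x" by (rule deriv_cong_ev) simp
  also have "\<dots> = D" using assms(1) by (rule DERIV_imp_deriv)
  finally show ?thesis .
qed

lemma Dx_fst[simp]: "Dx fst p = 1"
  unfolding Dx_def by (simp add: DERIV_imp_deriv[OF DERIV_ident])
lemma Dy_fst[simp]: "Dy fst p = 0"
  unfolding Dy_def by simp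
lemma Dx_snd[simp]: "Dx snd p = 0"
  unfolding Dx_def by simp
lemma Dy_snd[simp]: "Dy snd p = 1"
  unfolding Dy_def by (simp add: DERIV_imp_deriv[OF DERIV_ident])

lemma Dx_at: "Dx F (x,y) = deriv (\<lambda>\<sigma>. F (\<sigma>,y)) x" by (simp add: Dx_def)
lemma Dy_at: "Dy F (x,y) = deriv (\<lambda>\<sigma>. F (x,\<sigma>)) y" by (simp add: Dy_def)

lemma curv_fst: "blaschke_curvature fst v w p = - Dy (blaschke_alpha fst v w) p"
  unfolding blaschke_curvature_def by simp
lemma curv_snd: "blaschke_curvature snd v w p = Dx (blaschke_alpha snd v w) p"
  unfolding blaschke_curvature_def by simp

lemma alpha_fst_snd: "blaschke_alpha fst snd h p = Dx (\<lambda>q. Dy h q / Dx h q) p / (Dy h p / Dx h p)"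
proof -
  have "(\<lambda>q. bracket h fst q / bracket snd h q) = (\<lambda>q. Dy h q / Dx h q)"
    by (simp add: fun_eq_iff bracket_def)
  then show ?thesis unfolding blaschke_alpha_def Let_def by (simp add: bracket_def)
qed

lemma alpha_fst: "blaschke_alpha fst v w p =
   (let R = (\<lambda>q. - Dy w q / (Dx v q * Dy w q - Dx w q * Dy v q))
    in ((Dx R p / R p) * Dy v p - (Dy R p / R p) * Dx v p) / Dy v p)"
proof -
  have "(\<lambda>q. bracket w fst q / bracket v w q) = (\<lambda>q. - Dy w q / (Dx v q * Dy w q - Dx w q * Dy v q))"
    by (simp add: fun_eq_iff bracket_def)
  then show ?thesis unfolding blaschke_alpha_def Let_def by (simp add: bracket_def)
qed

lemma alpha_snd: "blaschke_alpha snd v w p =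
   (let R = (\<lambda>q. Dx w q / (Dx v q * Dy w q - Dx w q * Dy v q))
    in ((Dx R p / R p) * Dy v p - (Dy R p / R p) * Dx v p) / (- Dx v p))"
proof -
  have "(\<lambda>q. bracket w snd q / bracket v w q) = (\<lambda>q. Dx w q / (Dx v q * Dy w q - Dx w q * Dy v q))"
    by (simp add: fun_eq_iff bracket_def)
  then show ?thesis unfolding blaschke_alpha_def Let_def by (simp add: bracket_def)
qed

locale webu =
  fixes u u1 u2 u3 :: "real \<Rightarrow> real" and a r :: real
  assumes a: "a \<noteq> 0" and u0: "u 0 = a" and r: "r > 0"
    and du: "\<And>t. \<bar>t\<bar> < r \<Longrightarrow> (u has_real_derivative u1 t) (at t)"
    and du1: "\<And>t. \<bar>t\<bar> < r \<Longrightarrow> (u1 has_real_derivative u2 t) (at t)"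
    and du2: "\<And>t. \<bar>t\<bar> < r \<Longrightarrow> (u2 has_real_derivative u3 t) (at t)"
    and ode: "\<And>t. \<bar>t\<bar> < r \<Longrightarrow> t * (u1 t)\<^sup>2 + u t * u1 t = 1/2"
begin

lemma du_c[derivative_intros]:
  "\<bar>g x\<bar> < r \<Longrightarrow> (g has_real_derivative g') (at x within S) \<Longrightarrow> ((\<lambda>s. u (g s)) has_real_derivative u1 (g x) * g') (at x within S)"
  using DERIV_chain2[OF du] by blast
lemma du1_c[derivative_intros]:
  "\<bar>g x\<bar> < r \<Longrightarrow> (g has_real_derivative g') (at x within S) \<Longrightarrow> ((\<lambda>s. u1 (g s)) has_real_derivative u2 (g x) * g') (at x within S)"
  using DERIV_chain2[OF du1] by blast
lemma du2_c[derivative_intros]: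
  "\<bar>g x\<bar> < r \<Longrightarrow> (g has_real_derivative g') (at x within S) \<Longrightarrow> ((\<lambda>s. u2 (g s)) has_real_derivative u3 (g x) * g') (at x within S)"
  using DERIV_chain2[OF du2] by blast

lemma c0: "u1 0 = 1 / (2 * a)"
  using ode[of 0] r a u0 by (simp add: field_simps)

definition "F1 x y = x^2/2 + u (x*y) + x*y*u1 (x*y)"
definition "F2 x y = 1 + x^2 * u1 (x*y)"
definition "G1 x y = x^2/2 - u (x*y) - x*y*u1 (x*y)"
definition "G2 x y = 1 - x^2 * u1 (x*y)"

lemma Dfx: "\<bar>x*y\<bar> < r \<Longrightarrow> Dx (web_f u) (x,y) = F1 x y"
  unfolding Dx_def web_f_def F1_def
  by (auto intro!: DERIV_imp_deriv derivative_eq_intros simp: power2_eq_square)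
lemma Dfy: "\<bar>x*y\<bar> < r \<Longrightarrow> Dy (web_f u) (x,y) = F2 x y"
  unfolding Dy_def web_f_def F2_def
  by (auto intro!: DERIV_imp_deriv derivative_eq_intros simp: power2_eq_square)
lemma Dgx: "\<bar>x*y\<bar> < r \<Longrightarrow> Dx (web_g u) (x,y) = G1 x y"
  unfolding Dx_def web_g_def G1_def
  by (auto intro!: DERIV_imp_deriv derivative_eq_intros simp: power2_eq_square)
lemma Dgy: "\<bar>x*y\<bar> < r \<Longrightarrow> Dy (web_g u) (x,y) = G2 x y"
  unfolding Dy_def web_g_def G2_def
  by (auto intro!: DERIV_imp_deriv derivative_eq_intros simp: power2_eq_square)

lemma ev_small: "\<forall>\<^sub>F p in nhds (0::real, 0::real). \<bar>fst p * snd p\<bar> < r"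
proof -
  have "((\<lambda>p::real\<times>real. fst p * snd p) \<longlongrightarrow> 0 * 0) (nhds (0, 0))"
    using tendsto_mult[OF tendsto_fst[OF filterlim_ident] tendsto_snd[OF filterlim_ident], of "(0::real,0::real)"]
    by simp
  then have "\<forall>\<^sub>F p in nhds (0::real, 0::real). dist (fst p * snd p) 0 < r"
    using r tendstoD by fastforce
  then show ?thesis by (simp add: dist_real_def)
qed

lemma cross_ratio:
  "\<forall>\<^sub>F p in nhds (0, 0).
      Dx (web_f u) p * Dy (web_g u) p + Dx (web_g u) p * Dy (web_f u) p = 0"
  using ev_small
proof (rule eventually_mono)
  fix p :: "real \<times> real" assume h: "\<bar>fst p * snd p\<bar> < r"
  obtain x y where p: "p = (x,y)" by (cases p)
  have h': "\<bar>x*y\<bar> < r" using h p by simp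
  have "F1 x y * G2 x y + G1 x y * F2 x y = x^2 * (1 - 2 * ((x*y) * (u1 (x*y))\<^sup>2 + u (x*y) * u1 (x*y)))"
    unfolding F1_def F2_def G1_def G2_def by (simp add: algebra_simps power2_eq_square)
  also have "\<dots> = 0" using ode[OF h'] by simp
  finally show "Dx (web_f u) p * Dy (web_g u) p + Dx (web_g u) p * Dy (web_f u) p = 0"
    using Dfx[OF h'] Dfy[OF h'] Dgx[OF h'] Dgy[OF h'] p by simp
qed

lemma near_line:
  fixes s :: real
  obtains d where "d > 0" "\<And>\<sigma>. \<bar>\<sigma> - 0\<bar> < d \<Longrightarrow> \<bar>\<sigma> * s\<bar> < r"
proof -
  define d where "d = r / (\<bar>s\<bar> + 1)"
  have d: "d > 0" using r by (simp add: d_def)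
  have "\<bar>\<sigma> * s\<bar> < r" if "\<bar>\<sigma> - 0\<bar> < d" for \<sigma>
  proof -
    have "\<bar>\<sigma> * s\<bar> \<le> \<bar>\<sigma>\<bar> * (\<bar>s\<bar> + 1)" by (simp add: abs_mult mult_left_mono)
    also have "\<dots> < d * (\<bar>s\<bar> + 1)" using that by (intro mult_strict_right_mono) auto
    also have "\<dots> = r" unfolding d_def by (simp add: field_simps)
    finally show ?thesis .
  qed
  then show ?thesis using that d by blast
qed

lemma near_line':
  fixes s :: real
  obtains d where "d > 0" "\<And>\<sigma>. \<bar>\<sigma> - 0\<bar> < d \<Longrightarrow> \<bar>s * \<sigma>\<bar> < r"
  using near_line[of s] by (metis mult.commute)

lemma curv_fsf: "blaschke_curvature fst snd (web_f u) (0,0) = 1 / a^2"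
proof -
  define c where "c = u1 0"
  have al: "blaschke_alpha fst snd (web_f u) (0,s) = -2 * s * c / a" for s
  proof -
    obtain d where d: "d > 0" "\<And>\<sigma>. \<bar>\<sigma> - 0\<bar> < d \<Longrightarrow> \<bar>\<sigma> * s\<bar> < r" using near_line by blast
    have K: "((\<lambda>\<sigma>. F2 \<sigma> s / F1 \<sigma> s) has_real_derivative (- 2 * s * c / a^2)) (at 0)"
      unfolding F1_def F2_def c_def using r a u0
      by (auto intro!: derivative_eq_intros simp: power2_eq_square)
    have "Dx (\<lambda>q. Dy (web_f u) q / Dx (web_f u) q) (0,s) = - 2 * s * c / a^2"
      apply (subst Dx_at)
      apply (rule deriv_loc[OF K d(1)])
      by (simp add: d(2) Dfx Dfy)
    moreover have "Dy (web_f u) (0,s) / Dx (web_f u) (0,s) = 1 / a"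
      using Dfx[of 0 s] Dfy[of 0 s] r u0 unfolding F1_def F2_def by simp
    ultimately show ?thesis unfolding alpha_fst_snd using a by (simp add: power2_eq_square)
  qed
  have "Dy (blaschke_alpha fst snd (web_f u)) (0,0) = -2 * c / a"
    apply (subst Dy_at)
    apply (rule deriv_loc[where K="\<lambda>s. -2 * s * c / a" and d=1])
    using al a by (auto intro!: derivative_eq_intros)
  then show ?thesis unfolding curv_fst c_def c0 using a by (simp add: power2_eq_square)
qed

end


context webu begin

lemma F1_0s[simp]: "F1 0 s = a" unfolding F1_def by (simp add: u0)
lemma F2_0s[simp]: "F2 0 s = 1" unfolding F2_def by simp
lemma G1_0s[simp]: "G1 0 s = - a" unfolding G1_def by (simp add: u0)
lemma G2_0s[simp]: "G2 0 s = 1" unfolding G2_def by simp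
lemma F1_s0[simp]: "F1 s 0 = s^2/2 + a" unfolding F1_def by (simp add: u0)
lemma F2_s0[simp]: "F2 s 0 = 1 + s^2 * u1 0" unfolding F2_def by simp
lemma G1_s0[simp]: "G1 s 0 = s^2/2 - a" unfolding G1_def by (simp add: u0)
lemma G2_s0[simp]: "G2 s 0 = 1 - s^2 * u1 0" unfolding G2_def by simp

lemma hx_F1: "((\<lambda>\<sigma>. F1 \<sigma> s) has_real_derivative 2 * s * u1 0) (at 0)"
  unfolding F1_def using r by (auto intro!: derivative_eq_intros)
lemma hx_F2: "((\<lambda>\<sigma>. F2 \<sigma> s) has_real_derivative 0) (at 0)"
  unfolding F2_def using r by (auto intro!: derivative_eq_intros)
lemma hx_G1: "((\<lambda>\<sigma>. G1 \<sigma> s) has_real_derivative - 2 * s * u1 0) (at 0)"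
  unfolding G1_def using r by (auto intro!: derivative_eq_intros)
lemma hx_G2: "((\<lambda>\<sigma>. G2 \<sigma> s) has_real_derivative 0) (at 0)"
  unfolding G2_def using r by (auto intro!: derivative_eq_intros)
lemma hy_F1: "((\<lambda>\<sigma>. F1 s \<sigma>) has_real_derivative 2 * s * u1 0) (at 0)"
  unfolding F1_def using r by (auto intro!: derivative_eq_intros)
lemma hy_F2: "((\<lambda>\<sigma>. F2 s \<sigma>) has_real_derivative s^3 * u2 0) (at 0)"
  unfolding F2_def using r by (auto intro!: derivative_eq_intros simp: power3_eq_cube power2_eq_square)
lemma hy_G1: "((\<lambda>\<sigma>. G1 s \<sigma>) has_real_derivative - 2 * s * u1 0) (at 0)"
  unfolding G1_def using r by (auto intro!: derivative_eq_intros)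
lemma hy_G2: "((\<lambda>\<sigma>. G2 s \<sigma>) has_real_derivative - (s^3 * u2 0)) (at 0)"
  unfolding G2_def using r by (auto intro!: derivative_eq_intros simp: power3_eq_cube power2_eq_square)

lemma curv_ffg: "blaschke_curvature fst (web_f u) (web_g u) (0,0) = 1 / a^2"
proof -
  define c where "c = u1 0"
  define R where "R = (\<lambda>q. - Dy (web_g u) q / (Dx (web_f u) q * Dy (web_g u) q - Dx (web_g u) q * Dy (web_f u) q))"
  have al: "blaschke_alpha fst (web_f u) (web_g u) (0,s) = -2 * s * c / a" for s
  proof -
    obtain d where d: "d > 0" "\<And>\<sigma>. \<bar>\<sigma> - 0\<bar> < d \<Longrightarrow> \<bar>\<sigma> * s\<bar> < r" using near_line by blast
    have K: "((\<lambda>\<sigma>. - G2 \<sigma> s / (F1 \<sigma> s * G2 \<sigma> s - G1 \<sigma> s * F2 \<sigma> s)) has_real_derivative (s * c / a^2)) (at 0)"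
      using a unfolding c_def
      by (auto intro!: derivative_eq_intros hx_F1 hx_F2 hx_G1 hx_G2 simp: power2_eq_square field_simps)
    have DxR: "Dx R (0,s) = s * c / a^2"
      unfolding R_def
      apply (subst Dx_at)
      apply (rule deriv_loc[OF K d(1)])
      by (simp add: d(2) Dfx Dfy Dgx Dgy)
    have R0: "R (0,\<sigma>) = - 1 / (2 * a)" for \<sigma>
      unfolding R_def using r by (simp add: Dfx Dfy Dgx Dgy)
    have DyR: "Dy R (0,s) = 0"
      apply (subst Dy_at)
      apply (rule deriv_loc[where K="\<lambda>_. - 1 / (2 * a)" and d=1])
      using R0 by auto
    have "Dy (web_f u) (0,s) = 1" "Dx (web_f u) (0,s) = a" using r by (simp_all add: Dfx Dfy)
    then show ?thesis unfolding alpha_fst Let_def R_def[symmetric] DxR DyR R0 using a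
      by (simp add: power2_eq_square)
  qed
  have "Dy (blaschke_alpha fst (web_f u) (web_g u)) (0,0) = -2 * c / a"
    apply (subst Dy_at)
    apply (rule deriv_loc[where K="\<lambda>s. -2 * s * c / a" and d=1])
    using al a by (auto intro!: derivative_eq_intros)
  then show ?thesis unfolding curv_fst c_def c0 using a by (simp add: power2_eq_square)
qed

lemma small4: assumes "\<bar>s\<bar> < 1" "\<bar>s\<bar> < \<bar>a\<bar>" shows "s^4 < 4 * a^2"
proof -
  have "s^2 < 1" using assms(1) by (simp add: abs_square_less_1)
  have "\<bar>s\<bar>^2 < \<bar>a\<bar>^2" using assms(2) by (intro power_strict_mono) auto
  then have "s^2 < a^2" by simp
  have "s^4 = s^2 * s^2" by (simp add: power2_eq_square power4_eq_xxxx)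
  also have "\<dots> \<le> s^2 * 1" using \<open>s^2 < 1\<close> by (intro mult_left_mono) auto
  also have "\<dots> < 4 * a^2" using \<open>s^2 < a^2\<close> zero_le_power2[of a] by linarith
  finally show ?thesis .
qed

lemma curv_sfg: "blaschke_curvature snd (web_f u) (web_g u) (0,0) = 1 / a^2"
proof -
  define c where "c = u1 0"
  define w where "w = u2 0"
  have c: "c = 1 / (2*a)" unfolding c_def c0 ..
  define R where "R = (\<lambda>q. Dx (web_g u) q / (Dx (web_f u) q * Dy (web_g u) q - Dx (web_g u) q * Dy (web_f u) q))"
  define Dn0 where "Dn0 s = (s^2/2 + a)*(1 - s^2*c) - (s^2/2 - a)*(1 + s^2*c)" for s
  define Dn0d where "Dn0d s = (s*(1 - s^2*c) + (s^2/2+a)*(-(2* s*c))) - (s*(1+s^2*c) + (s^2/2 - a)*(2* s*c))" for s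
  define Rf where "Rf s = (s^2/2 - a) / Dn0 s" for s
  define D1f where "D1f s = (s * Dn0 s - (s^2/2 - a) * Dn0d s) / (Dn0 s * Dn0 s)" for s
  define Dny where "Dny s = (2* s*c*(1 - s^2*c) + (s^2/2 + a)*(-(s^3 * w))) - ((-(2* s*c))*(1 + s^2*c) + (s^2/2 - a)*(s^3 * w))" for s
  define E2f where "E2f s = ((-(2* s*c)) * Dn0 s - (s^2/2 - a) * Dny s) / (Dn0 s * Dn0 s)" for s
  define A where "A s = ((D1f s / Rf s) * (1 + s^2*c) - (E2f s / Rf s) * (s^2/2 + a)) / (-(s^2/2 + a))" for s
  define \<delta> where "\<delta> = min 1 \<bar>a\<bar>"
  have dpos: "\<delta> > 0" unfolding \<delta>_def using a by simp
  have Dn0_eq: "Dn0 s = 2 * a - c * s^4" for s unfolding Dn0_def by (simp add: field_simps power2_eq_square power4_eq_xxxx)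
  have Dn0nz: "Dn0 s \<noteq> 0" if "\<bar>s\<bar> < \<delta>" for s
  proof
    assume "Dn0 s = 0"
    then have "s^4 = 4 * a^2" unfolding Dn0_eq c using a by (simp add: field_simps power2_eq_square)
    moreover have "s^4 < 4 * a^2" using that small4 unfolding \<delta>_def by auto
    ultimately show False by simp
  qed
  have Rfd: "(Rf has_real_derivative D1f s) (at s)" if "\<bar>s\<bar> < \<delta>" for s
    unfolding Rf_def[abs_def] D1f_def Dn0_def Dn0d_def using Dn0nz[OF that] unfolding Dn0_def
    by (auto intro!: derivative_eq_intros simp: power2_eq_square)
  have al: "blaschke_alpha snd (web_f u) (web_g u) (s,0) = A s" if s: "\<bar>s\<bar> < \<delta>" for s
  proof -
    obtain d where d: "d > 0" "\<And>\<sigma>. \<bar>\<sigma> - 0\<bar> < d \<Longrightarrow> \<bar>s * \<sigma>\<bar> < r" using near_line' by blast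
    have K: "((\<lambda>\<sigma>. G1 s \<sigma> / (F1 s \<sigma> * G2 s \<sigma> - G1 s \<sigma> * F2 s \<sigma>)) has_real_derivative E2f s) (at 0)"
      using Dn0nz[OF s] unfolding E2f_def Dny_def c_def w_def Dn0_def
      by (auto intro!: derivative_eq_intros hy_F1 hy_F2 hy_G1 hy_G2)
    have DyR: "Dy R (s,0) = E2f s"
      unfolding R_def
      apply (subst Dy_at)
      apply (rule deriv_loc[OF K d(1)])
      by (simp add: d(2) Dfx Dfy Dgx Dgy)
    have R0: "R (\<sigma>,0) = Rf \<sigma>" for \<sigma>
      unfolding R_def Rf_def Dn0_def c_def using r by (simp add: Dfx Dfy Dgx Dgy)
    have DxR: "Dx R (s,0) = D1f s"
      apply (subst Dx_at)
      apply (rule deriv_loc[OF Rfd[OF s] zero_less_one])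
      using R0 by auto
    have "Dy (web_f u) (s,0) = 1 + s^2 * c" "Dx (web_f u) (s,0) = s^2/2 + a" using r by (simp_all add: Dfx Dfy c_def)
    then show ?thesis unfolding alpha_snd Let_def R_def[symmetric] DxR DyR R0 A_def by simp
  qed
  have Rf0: "Rf 0 = - 1 / 2" unfolding Rf_def Dn0_def using a by simp
  have Rfd0: "(Rf has_real_derivative 0) (at 0)" using Rfd[of 0] dpos by (simp add: D1f_def Dn0d_def)
  have D1f0: "D1f 0 = 0" by (simp add: D1f_def Dn0d_def)
  have E2f0: "E2f 0 = 0" by (simp add: E2f_def Dny_def)
  have D1fd: "(D1f has_real_derivative 1 / (2 * a)) (at 0)"
    unfolding D1f_def[abs_def] Dn0d_def Dn0_def using a
    by (auto intro!: derivative_eq_intros simp: power2_eq_square)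
  have E2fd: "(E2f has_real_derivative 0) (at 0)"
    unfolding E2f_def[abs_def] Dny_def Dn0_def using a
    by (auto intro!: derivative_eq_intros simp: power2_eq_square)
  have Ad: "(A has_real_derivative 1 / a^2) (at 0)"
    unfolding A_def[abs_def] using a Rf0 D1f0 E2f0
    by (auto intro!: derivative_eq_intros Rfd0 D1fd E2fd simp: power2_eq_square)
  have "Dx (blaschke_alpha snd (web_f u) (web_g u)) (0,0) = 1 / a^2"
    apply (subst Dx_at)
    apply (rule deriv_loc[OF Ad dpos])
    using al by auto
  then show ?thesis unfolding curv_snd .
qed

end


lemma deriv_zero:
  assumes "(F has_real_derivative D) (at x)" "\<bar>x\<bar> < e" "\<And>z. \<bar>z\<bar> < e \<Longrightarrow> F z = 0"
  shows "D = 0"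
proof -
  have "((\<lambda>_. 0) has_real_derivative D) (at x)"
    apply (rule has_field_derivative_transform_within_open[OF assms(1), of "{-e<..<e}"])
    using assms(2,3) by auto
  then show ?thesis using DERIV_const DERIV_unique by blast
qed

context webu begin

lemma w0: "u2 0 = - 1 / (2 * a^3)"
proof -
  have E: "((\<lambda>t. t * (u1 t)\<^sup>2 + u t * u1 t) has_real_derivative
      1 * (u1 0)\<^sup>2 + 0 * (2 * u1 0 * u2 0) + (u1 0 * u1 0 + u 0 * u2 0)) (at 0)"
    using r by (auto intro!: derivative_eq_intros du du1 simp: power2_eq_square)
  have "((\<lambda>t. t * (u1 t)\<^sup>2 + u t * u1 t - 1/2) has_real_derivative
      1 * (u1 0)\<^sup>2 + 0 * (2 * u1 0 * u2 0) + (u1 0 * u1 0 + u 0 * u2 0) - 0) (at 0)"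
    using DERIV_diff[OF E DERIV_const[of "1/2"]] by simp
  then have "1 * (u1 0)\<^sup>2 + 0 * (2 * u1 0 * u2 0) + (u1 0 * u1 0 + u 0 * u2 0) - 0 = 0"
    by (rule deriv_zero[where e=r]) (use r ode in auto)
  then have "2 * (u1 0)^2 + a * u2 0 = 0" using u0 by (simp add: power2_eq_square)
  then show ?thesis unfolding c0 using a by (simp add: field_simps power2_eq_square power3_eq_cube)
qed

lemma neg_locale: "webu (\<lambda>t. - u t) (\<lambda>t. - u1 t) (\<lambda>t. - u2 t) (\<lambda>t. - u3 t) (-a) r"
  by unfold_locales (use a u0 r ode in \<open>auto intro!: derivative_eq_intros du du1 du2\<close>)

lemma web_g_neg: "web_g u = web_f (\<lambda>t. - u t)"
  by (simp add: fun_eq_iff web_f_def web_g_def)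

lemma curv_fsg: "blaschke_curvature fst snd (web_g u) (0,0) = 1 / a^2"
  using webu.curv_fsf[OF neg_locale] web_g_neg by simp

definition "F11 x y = x + 2 * y * u1 (x*y) + x * y^2 * u2 (x*y)"
definition "F111 x y = 1 + 3 * y^2 * u2 (x*y) + x * y^3 * u3 (x*y)"
definition "G11 x y = x - 2 * y * u1 (x*y) - x * y^2 * u2 (x*y)"
definition "G111 x y = 1 - 3 * y^2 * u2 (x*y) - x * y^3 * u3 (x*y)"

lemma hf_x: "\<bar>x*y\<bar> < r \<Longrightarrow> ((\<lambda>\<sigma>. web_f u (\<sigma>, y)) has_real_derivative F1 x y) (at x)"
  unfolding web_f_def F1_def by (auto intro!: derivative_eq_intros simp: power2_eq_square)
lemma hg_x: "\<bar>x*y\<bar> < r \<Longrightarrow> ((\<lambda>\<sigma>. web_g u (\<sigma>, y)) has_real_derivative G1 x y) (at x)"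
  unfolding web_g_def G1_def by (auto intro!: derivative_eq_intros simp: power2_eq_square)
lemma hF1_x: "\<bar>x*y\<bar> < r \<Longrightarrow> ((\<lambda>\<sigma>. F1 \<sigma> y) has_real_derivative F11 x y) (at x)"
  unfolding F1_def F11_def by (auto intro!: derivative_eq_intros simp: power2_eq_square)
lemma hG1_x: "\<bar>x*y\<bar> < r \<Longrightarrow> ((\<lambda>\<sigma>. G1 \<sigma> y) has_real_derivative G11 x y) (at x)"
  unfolding G1_def G11_def by (auto intro!: derivative_eq_intros simp: power2_eq_square)
lemma hF11_x: "\<bar>x*y\<bar> < r \<Longrightarrow> ((\<lambda>\<sigma>. F11 \<sigma> y) has_real_derivative F111 x y) (at x)"
  unfolding F11_def F111_def by (auto intro!: derivative_eq_intros simp: power2_eq_square power3_eq_cube)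
lemma hG11_x: "\<bar>x*y\<bar> < r \<Longrightarrow> ((\<lambda>\<sigma>. G11 \<sigma> y) has_real_derivative G111 x y) (at x)"
  unfolding G11_def G111_def by (auto intro!: derivative_eq_intros simp: power2_eq_square power3_eq_cube)

lemma F11_0[simp]: "F11 0 y = 2 * y * u1 0" by (simp add: F11_def)
lemma G11_0[simp]: "G11 0 y = - 2 * y * u1 0" by (simp add: G11_def)
lemma F111_0[simp]: "F111 0 y = 1 + 3 * y^2 * u2 0" by (simp add: F111_def)
lemma G111_0[simp]: "G111 0 y = 1 - 3 * y^2 * u2 0" by (simp add: G111_def)
lemma wf_0[simp]: "web_f u (0, y) = y" by (simp add: web_f_def)
lemma wg_0[simp]: "web_g u (0, y) = y" by (simp add: web_g_def)

end


locale rk = webu +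
  fixes p0 p1 p2 p3 q0 A0 A1 A2 A3 B0 B1 B2 B3 :: "real \<Rightarrow> real" and \<rho> \<epsilon> :: real
  assumes rho: "\<rho> > 0" and eps: "\<epsilon> > 0"
    and dp0: "\<And>t. \<bar>t\<bar> < \<rho> \<Longrightarrow> (p0 has_real_derivative p1 t) (at t)"
    and dp1: "\<And>t. \<bar>t\<bar> < \<rho> \<Longrightarrow> (p1 has_real_derivative p2 t) (at t)"
    and dp2: "\<And>t. \<bar>t\<bar> < \<rho> \<Longrightarrow> (p2 has_real_derivative p3 t) (at t)"
    and dA0: "\<And>t. \<bar>t\<bar> < \<rho> \<Longrightarrow> (A0 has_real_derivative A1 t) (at t)"
    and dA1: "\<And>t. \<bar>t\<bar> < \<rho> \<Longrightarrow> (A1 has_real_derivative A2 t) (at t)"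
    and dA2: "\<And>t. \<bar>t\<bar> < \<rho> \<Longrightarrow> (A2 has_real_derivative A3 t) (at t)"
    and dB0: "\<And>t. \<bar>t\<bar> < \<rho> \<Longrightarrow> (B0 has_real_derivative B1 t) (at t)"
    and dB1: "\<And>t. \<bar>t\<bar> < \<rho> \<Longrightarrow> (B1 has_real_derivative B2 t) (at t)"
    and dB2: "\<And>t. \<bar>t\<bar> < \<rho> \<Longrightarrow> (B2 has_real_derivative B3 t) (at t)"
    and z: "p0 0 = 0" "q0 0 = 0" "A0 0 = 0" "B0 0 = 0"
    and bnd: "\<And>x y. \<bar>x\<bar> < \<epsilon> \<Longrightarrow> \<bar>y\<bar> < \<epsilon> \<Longrightarrow>
        \<bar>web_f u (x,y)\<bar> < \<rho> \<and> \<bar>web_g u (x,y)\<bar> < \<rho> \<and> \<bar>x\<bar> < \<rho> \<and> \<bar>x*y\<bar> < r"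
    and ident: "\<And>x y. \<bar>x\<bar> < \<epsilon> \<Longrightarrow> \<bar>y\<bar> < \<epsilon> \<Longrightarrow>
        p0 x + q0 y + A0 (web_f u (x,y)) + B0 (web_g u (x,y)) = 0"
begin

lemma chainrule:
  assumes "\<And>t. \<bar>t\<bar> < \<rho> \<Longrightarrow> (P has_real_derivative Q t) (at t)"
  shows "\<bar>g x\<bar> < \<rho> \<Longrightarrow> (g has_real_derivative g') (at x) \<Longrightarrow> ((\<lambda>s. P (g s)) has_real_derivative Q (g x) * g') (at x)"
  using DERIV_chain2[OF assms] by blast

lemmas chains = chainrule[OF dp0] chainrule[OF dp1] chainrule[OF dp2]
  chainrule[OF dA0] chainrule[OF dA1] chainrule[OF dA2]
  chainrule[OF dB0] chainrule[OF dB1] chainrule[OF dB2]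

lemma L1: assumes x: "\<bar>x\<bar> < \<epsilon>" and y: "\<bar>y\<bar> < \<epsilon>"
  shows "p1 x + A1 (web_f u (x,y)) * F1 x y + B1 (web_g u (x,y)) * G1 x y = 0"
proof -
  have b: "\<bar>web_f u (x,y)\<bar> < \<rho>" "\<bar>web_g u (x,y)\<bar> < \<rho>" "\<bar>x\<bar> < \<rho>" "\<bar>x*y\<bar> < r"
    using bnd[OF x y] by auto
  have "((\<lambda>\<sigma>. p0 \<sigma> + q0 y + A0 (web_f u (\<sigma>,y)) + B0 (web_g u (\<sigma>,y))) has_real_derivative
     p1 x + A1 (web_f u (x,y)) * F1 x y + B1 (web_g u (x,y)) * G1 x y) (at x)"
    using b by (auto intro!: derivative_eq_intros chains hf_x hg_x)
  then show ?thesis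
    by (rule deriv_zero[where e=\<epsilon>]) (use x y ident in auto)
qed

lemma L2: assumes x: "\<bar>x\<bar> < \<epsilon>" and y: "\<bar>y\<bar> < \<epsilon>"
  shows "p2 x + (A2 (web_f u (x,y)) * F1 x y * F1 x y + A1 (web_f u (x,y)) * F11 x y)
       + (B2 (web_g u (x,y)) * G1 x y * G1 x y + B1 (web_g u (x,y)) * G11 x y) = 0"
proof -
  have b: "\<bar>web_f u (x,y)\<bar> < \<rho>" "\<bar>web_g u (x,y)\<bar> < \<rho>" "\<bar>x\<bar> < \<rho>" "\<bar>x*y\<bar> < r"
    using bnd[OF x y] by auto
  have "((\<lambda>\<sigma>. p1 \<sigma> + A1 (web_f u (\<sigma>,y)) * F1 \<sigma> y + B1 (web_g u (\<sigma>,y)) * G1 \<sigma> y) has_real_derivative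
     p2 x + (A2 (web_f u (x,y)) * F1 x y * F1 x y + A1 (web_f u (x,y)) * F11 x y)
       + (B2 (web_g u (x,y)) * G1 x y * G1 x y + B1 (web_g u (x,y)) * G11 x y)) (at x)"
    using b by (auto intro!: derivative_eq_intros chains hf_x hg_x hF1_x hG1_x)
  then show ?thesis
    by (rule deriv_zero[where e=\<epsilon>]) (use x y L1 in auto)
qed

lemma L3gen: assumes x: "\<bar>x\<bar> < \<epsilon>" and y: "\<bar>y\<bar> < \<epsilon>"
  shows "((\<lambda>\<sigma>. p2 \<sigma> + (A2 (web_f u (\<sigma>,y)) * F1 \<sigma> y * F1 \<sigma> y + A1 (web_f u (\<sigma>,y)) * F11 \<sigma> y)
       + (B2 (web_g u (\<sigma>,y)) * G1 \<sigma> y * G1 \<sigma> y + B1 (web_g u (\<sigma>,y)) * G11 \<sigma> y)) has_real_derivative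
     p3 x + (A3 (web_f u (x,y)) * F1 x y * F1 x y * F1 x y + 3 * A2 (web_f u (x,y)) * F1 x y * F11 x y + A1 (web_f u (x,y)) * F111 x y)
       + (B3 (web_g u (x,y)) * G1 x y * G1 x y * G1 x y + 3 * B2 (web_g u (x,y)) * G1 x y * G11 x y + B1 (web_g u (x,y)) * G111 x y)) (at x)"
proof -
  have b: "\<bar>web_f u (x,y)\<bar> < \<rho>" "\<bar>web_g u (x,y)\<bar> < \<rho>" "\<bar>x\<bar> < \<rho>" "\<bar>x*y\<bar> < r"
    using bnd[OF x y] by auto
  show ?thesis
    using b by (auto intro!: derivative_eq_intros chains hf_x hg_x hF1_x hG1_x hF11_x hG11_x
        simp: algebra_simps)
qed

lemma L3: assumes y: "\<bar>y\<bar> < \<epsilon>"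
  shows "p3 0 + (A3 y * a^3 + 3 * A2 y * a * (2 * y * u1 0) + A1 y * (1 + 3 * y^2 * u2 0))
       + (- B3 y * a^3 + 3 * B2 y * a * (2 * y * u1 0) + B1 y * (1 - 3 * y^2 * u2 0)) = 0"
proof -
  have x: "\<bar>0::real\<bar> < \<epsilon>" using eps by simp
  have "p3 0 + (A3 (web_f u (0,y)) * F1 0 y * F1 0 y * F1 0 y + 3 * A2 (web_f u (0,y)) * F1 0 y * F11 0 y + A1 (web_f u (0,y)) * F111 0 y)
       + (B3 (web_g u (0,y)) * G1 0 y * G1 0 y * G1 0 y + 3 * B2 (web_g u (0,y)) * G1 0 y * G11 0 y + B1 (web_g u (0,y)) * G111 0 y) = 0"
    by (rule deriv_zero[OF L3gen[OF x y], where e=\<epsilon>]) (use x y L2 in auto)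
  then show ?thesis by (simp add: power3_eq_cube)
qed

lemma yrho: "\<bar>y\<bar> < \<epsilon> \<Longrightarrow> \<bar>y\<bar> < \<rho>"
  using bnd[of 0 y] eps by simp

lemma Hs:
  shows "\<exists>K. \<forall>y. \<bar>y\<bar> < \<epsilon> \<longrightarrow> A1 y = -K \<and> B1 y = -K"
proof -
  define k where "k = - p1 0 / a"
  define c where "c = u1 0"
  define w where "w = u2 0"
  have ca: "c * (2 * a) = 1" unfolding c_def c0 using a by simp
  have wa: "w * (2 * a^3) = -1" unfolding w_def w0 using a by simp
  have x0: "\<bar>0::real\<bar> < \<epsilon>" using eps by simp
  have H1: "A1 y - B1 y = k" if y: "\<bar>y\<bar> < \<epsilon>" for y
    using L1[OF x0 y] a unfolding k_def by (simp add: field_simps)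
  have H2: "A2 y - B2 y = 0" if y: "\<bar>y\<bar> < \<epsilon>" for y
  proof -
    have "((\<lambda>z. A1 z - B1 z - k) has_real_derivative A2 y - B2 y - 0) (at y)"
      using yrho[OF y] by (intro derivative_intros dA1 dB1)
    then have "A2 y - B2 y - 0 = 0" by (rule deriv_zero[where e=\<epsilon>]) (use y H1 in auto)
    then show ?thesis by simp
  qed
  have H3: "A3 y - B3 y = 0" if y: "\<bar>y\<bar> < \<epsilon>" for y
  proof -
    have "((\<lambda>z. A2 z - B2 z) has_real_derivative A3 y - B3 y) (at y)"
      using yrho[OF y] by (intro derivative_intros dA2 dB2)
    then show ?thesis by (rule deriv_zero[where e=\<epsilon>]) (use y H2 in auto)
  qed
  have E2: "a^2 * (A2 y + B2 y) + p2 0 + 2 * y * c * k = 0" if y: "\<bar>y\<bar> < \<epsilon>" for y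
  proof -
    have "p2 0 + (A2 y * a * a + A1 y * (2 * y * c)) + (B2 y * (-a) * (-a) + B1 y * (-(2 * y * c))) = 0"
      using L2[OF x0 y] unfolding c_def by simp
    then show ?thesis using H1[OF y] by algebra
  qed
  have S: "2*a^3*(A1 y + B1 y) = -2*a^3*p3 0 + 6*a*p2 0*y + 9*k*y^2" if y: "\<bar>y\<bar> < \<epsilon>" for y
  proof -
    have l3: "p3 0 + (A3 y * a^3 + 3 * A2 y * a * (2 * y * c) + A1 y * (1 + 3 * y^2 * w))
       + (- B3 y * a^3 + 3 * B2 y * a * (2 * y * c) + B1 y * (1 - 3 * y^2 * w)) = 0"
      using L3[OF y] unfolding c_def w_def .
    show ?thesis using l3 H1[OF y] H3[OF y] E2[OF y] ca wa by algebra
  qed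
  define C1 where "C1 = 3*p2 0/a^2"
  define C2 where "C2 = 9*k/(2*a^3)"
  define P where "P y = -p3 0 + C1 * y + C2 * y^2" for y
  have SP: "A1 y + B1 y = P y" if y: "\<bar>y\<bar> < \<epsilon>" for y
  proof -
    have m: "P y * (2*a^3) = -2*a^3*p3 0 + 6*a*p2 0*y + 9*k*y^2"
      unfolding P_def C1_def C2_def using a by (simp add: field_simps power2_eq_square power3_eq_cube)
    then have "(A1 y + B1 y) * (2*a^3) = P y * (2*a^3)" using S[OF y] by (simp add: mult.commute)
    then show ?thesis using a by simp
  qed
  have Sd: "A2 y + B2 y = C1 + C2 * (2*y)" if y: "\<bar>y\<bar> < \<epsilon>" for y
  proof -
    have d1: "((\<lambda>z. A1 z + B1 z) has_real_derivative A2 y + B2 y) (at y)"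
      using yrho[OF y] by (intro derivative_intros dA1 dB1)
    have d2: "(P has_real_derivative C1 + C2 * (2*y)) (at y)"
      unfolding P_def[abs_def] by (auto intro!: derivative_eq_intros simp: power2_eq_square)
    have d3: "((\<lambda>z. A1 z + B1 z) has_real_derivative C1 + C2 * (2*y)) (at y)"
      apply (rule has_field_derivative_transform_within_open[OF d2, of "{-\<epsilon><..<\<epsilon>}"])
      using y SP by auto
    show ?thesis using DERIV_unique[OF d1 d3] .
  qed
  have Eq: "4*a*p2 0 + 10*k*y = 0" if y: "\<bar>y\<bar> < \<epsilon>" for y
  proof -
    have e: "a^2 * (C1 + C2 * (2*y)) + p2 0 + 2 * y * c * k = 0"
      using E2[OF y] Sd[OF y] by simp
    have c1: "a^2 * C1 = 3*p2 0" unfolding C1_def using a by simp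
    have c2: "a^3 * C2 = 9*k/2" unfolding C2_def using a by simp
    have "a * (a^2 * (C1 + C2 * (2*y)) + p2 0 + 2 * y * c * k)
        = a * (a^2 * C1) + 2 * y * (a^3 * C2) + a * p2 0 + 2*a*y*c*k"
      by (simp add: algebra_simps power2_eq_square power3_eq_cube)
    also have "\<dots> = 4*a*p2 0 + 9*k*y + 2*a*y*c*k" unfolding c1 c2 by (simp add: algebra_simps)
    finally have "a * (a^2 * (C1 + C2 * (2*y)) + p2 0 + 2 * y * c * k)
        = 4*a*p2 0 + 9*k*y + 2*a*y*c*k" .
    then have "4*a*p2 0 + 9*k*y + 2*a*y*c*k = 0" using e by simp
    then show ?thesis using ca by algebra
  qed
  have p20: "p2 0 = 0" using Eq[of 0] eps a by simp
  have "k = 0" using Eq[of "\<epsilon>/2"] eps p20 by simp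
  then have "A1 y = - (p3 0 / 2) \<and> B1 y = - (p3 0 / 2)" if y: "\<bar>y\<bar> < \<epsilon>" for y
  proof -
    have "2*a^3*(A1 y + B1 y + p3 0) = 0" using S[OF y] \<open>k = 0\<close> p20 by (simp add: algebra_simps)
    then have "A1 y + B1 y + p3 0 = 0" using a by simp
    then show ?thesis using H1[OF y] \<open>k = 0\<close> by linarith
  qed
  then show ?thesis by blast
qed

lemma antider:
  assumes "\<And>y. \<bar>y\<bar> < \<epsilon> \<Longrightarrow> (P has_real_derivative Q y) (at y)"
    and "\<And>y. \<bar>y\<bar> < \<epsilon> \<Longrightarrow> Q y = - K" and "P 0 = 0"
  shows "\<And>y. \<bar>y\<bar> < \<epsilon> \<Longrightarrow> P y = - K * y"
proof -
  have "\<exists>c. \<forall>x\<in>{-\<epsilon><..<\<epsilon>}. P x + K * x = c"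
  proof (rule has_field_derivative_zero_constant)
    show "convex {-\<epsilon><..<\<epsilon>}" by simp
    fix x assume x: "x \<in> {-\<epsilon><..<\<epsilon>}"
    then have x': "\<bar>x\<bar> < \<epsilon>" by auto
    have "((\<lambda>x. P x + K * x) has_real_derivative Q x + K * 1) (at x)"
      using assms(1)[OF x'] by (intro derivative_intros) auto
    then show "((\<lambda>x. P x + K * x) has_real_derivative 0) (at x within {-\<epsilon><..<\<epsilon>})"
      using assms(2)[OF x'] by (simp add: has_field_derivative_at_within)
  qed
  then obtain c where c: "\<And>x. x \<in> {-\<epsilon><..<\<epsilon>} \<Longrightarrow> P x + K * x = c" by blast
  have "c = 0" using c[of 0] eps assms(3) by simp
  fix y assume "\<bar>y\<bar> < \<epsilon>"
  then have "y \<in> {-\<epsilon><..<\<epsilon>}" by auto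
  then have "P y + K * y = 0" using c \<open>c = 0\<close> by blast
  then show "P y = - K * y" by (simp add: add_eq_0_iff2)
qed

lemma rank_final:
  "\<exists>K \<delta>. \<delta> > 0 \<and> (\<forall>s. \<bar>s\<bar> < \<delta> \<longrightarrow> p0 s = K * (s^3/3) \<and> q0 s = K * (2* s) \<and> A0 s = K * (- s) \<and> B0 s = K * (- s))"
proof -
  obtain K where K: "\<And>y. \<bar>y\<bar> < \<epsilon> \<Longrightarrow> A1 y = -K \<and> B1 y = -K" using Hs by blast
  have A0: "A0 y = - K * y" if "\<bar>y\<bar> < \<epsilon>" for y
    apply (rule antider[of A0 A1 K, OF _ _ _ that])
      apply (rule dA0, erule yrho)
    using K z by auto
  have B0: "B0 y = - K * y" if "\<bar>y\<bar> < \<epsilon>" for y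
    apply (rule antider[of B0 B1 K, OF _ _ _ that])
      apply (rule dB0, erule yrho)
    using K z by auto
  have x0: "\<bar>0::real\<bar> < \<epsilon>" using eps by simp
  have q0: "q0 y = 2 * K * y" if y: "\<bar>y\<bar> < \<epsilon>" for y
    using ident[OF x0 y] A0[OF y] B0[OF y] z by simp
  have "isCont (\<lambda>x::real. x^3/6 + x*a) 0" by (intro continuous_intros) simp
  then have "((\<lambda>x. x^3/6 + x*a) \<longlongrightarrow> (\<lambda>x. x^3/6 + x*a) 0) (nhds 0)"
    unfolding isCont_def by (rule tendsto_at_iff_tendsto_nhds[THEN iffD1])
  then have ev1: "\<forall>\<^sub>F x in nhds 0. dist (x^3/6 + x*a) 0 < \<epsilon>" using eps tendstoD by fastforce
  have "isCont (\<lambda>x::real. x^3/6 - x*a) 0" by (intro continuous_intros) simp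
  then have "((\<lambda>x. x^3/6 - x*a) \<longlongrightarrow> (\<lambda>x. x^3/6 - x*a) 0) (nhds 0)"
    unfolding isCont_def by (rule tendsto_at_iff_tendsto_nhds[THEN iffD1])
  then have ev2: "\<forall>\<^sub>F x in nhds 0. dist (x^3/6 - x*a) 0 < \<epsilon>" using eps tendstoD by fastforce
  have ev3: "\<forall>\<^sub>F x in nhds 0. dist x (0::real) < \<epsilon>" using eps eventually_nhds_metric by blast
  have "\<forall>\<^sub>F x in nhds 0. \<bar>x^3/6 + x*a\<bar> < \<epsilon> \<and> \<bar>x^3/6 - x*a\<bar> < \<epsilon> \<and> \<bar>x\<bar> < \<epsilon>"
    using eventually_conj[OF ev1 eventually_conj[OF ev2 ev3]] by (simp add: dist_real_def)
  then obtain \<delta> where d: "\<delta> > 0" "\<And>x. dist x 0 < \<delta> \<Longrightarrow> \<bar>x^3/6 + x*a\<bar> < \<epsilon> \<and> \<bar>x^3/6 - x*a\<bar> < \<epsilon> \<and> \<bar>x\<bar> < \<epsilon>"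
    unfolding eventually_nhds_metric by blast
  define \<delta>' where "\<delta>' = min \<delta> \<epsilon>"
  have p0: "p0 x = K * (x^3/3)" if x: "\<bar>x\<bar> < \<delta>" for x
  proof -
    have b: "\<bar>x^3/6 + x*a\<bar> < \<epsilon>" "\<bar>x^3/6 - x*a\<bar> < \<epsilon>" "\<bar>x\<bar> < \<epsilon>" using d(2)[of x] x by (auto simp: dist_real_def)
    have f: "web_f u (x,0) = x^3/6 + x*a" "web_g u (x,0) = x^3/6 - x*a" by (simp_all add: web_f_def web_g_def u0)
    have "p0 x + q0 0 + A0 (x^3/6 + x*a) + B0 (x^3/6 - x*a) = 0" using ident[OF b(3) x0] f by simp
    then show ?thesis using A0[OF b(1)] B0[OF b(2)] z by (simp add: algebra_simps)
  qed
  show ?thesis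
    apply (rule exI[of _ K], rule exI[of _ \<delta>'])
    using d(1) eps p0 q0 A0 B0 unfolding \<delta>'_def by auto
qed

end


lemma analytic_monom: "real_analytic_at (\<lambda>s. k * s ^ m) 0"
  unfolding real_analytic_at_def
proof (intro exI[of _ 1] conjI exI[of _ "\<lambda>n. if n = m then k else 0"] allI impI)
  fix t :: real
  have "(\<lambda>n. if n = m then k * t ^ m else 0) sums (k * t ^ m)" by (rule sums_single)
  moreover have "(\<lambda>n. (if n = m then k else 0) * (t - 0) ^ n) = (\<lambda>n. if n = m then k * t ^ m else 0)"
    by auto
  ultimately show "(\<lambda>n. (if n = m then k else 0) * (t - 0) ^ n) sums (k * t ^ m)" by simp
qed simp

lemma not_hex: "blaschke_curvature u1 u2 u3 p \<noteq> 0 \<Longrightarrow> \<not> hexagonal_at u1 u2 u3 p"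
  unfolding hexagonal_at_def using eventually_nhds_x_imp_x by blast

lemma less4: "(i::nat) < 4 \<Longrightarrow> i = 0 \<or> i = 1 \<or> i = 2 \<or> i = 3" by auto

lemma sum4: "(\<Sum>i<(4::nat). h i) = h 0 + h 1 + h 2 + (h 3 :: real)"
  by (simp add: eval_nat_numeral)

lemma ev_box:
  assumes "\<forall>\<^sub>F p in nhds (0::real, 0::real). P p"
  obtains e where "e > 0" "\<And>x y. \<bar>x\<bar> < e \<Longrightarrow> \<bar>y\<bar> < e \<Longrightarrow> P (x, y)"
proof -
  obtain d where d: "d > 0" "\<And>p. dist p (0,0) < d \<Longrightarrow> P p"
    using assms unfolding eventually_nhds_metric by blast
  have "P (x, y)" if "\<bar>x\<bar> < d/2" "\<bar>y\<bar> < d/2" for x y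
  proof -
    have "dist (x,y) (0,0) = norm (x,y)" by (simp add: dist_norm)
    also have "\<dots> \<le> norm x + norm y" by (rule norm_Pair_le)
    also have "\<dots> < d" using that by simp
    finally show ?thesis using d(2) by blast
  qed
  then show ?thesis using that[of "d/2"] d(1) by simp
qed

lemma smooth3:
  assumes "real_analytic_at u 0"
  obtains r where "r > 0" "\<And>t. \<bar>t\<bar> < r \<Longrightarrow> (u has_real_derivative (deriv^^(Suc 0)) u t) (at t)"
    "\<And>t. \<bar>t\<bar> < r \<Longrightarrow> ((deriv^^(Suc 0)) u has_real_derivative (deriv^^(Suc (Suc 0))) u t) (at t)"
    "\<And>t. \<bar>t\<bar> < r \<Longrightarrow> ((deriv^^(Suc (Suc 0))) u has_real_derivative (deriv^^(Suc (Suc (Suc 0)))) u t) (at t)"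
proof -
  obtain r where r: "r > 0" "\<And>n t. \<bar>t\<bar> < r \<Longrightarrow> ((deriv^^n) u has_real_derivative (deriv^^(Suc n)) u t) (at t)"
    using analytic_smooth[OF assms] by blast
  show ?thesis
    apply (rule that[OF r(1)])
    using r(2)[of _ 0] r(2)[of _ "Suc 0"] r(2)[of _ "Suc (Suc 0)"] by simp_all
qed

lemma for_u:
  fixes a :: real
  assumes a: "a \<noteq> 0" and an: "real_analytic_at u 0" and u0: "u 0 = a"
    and ode: "\<forall>\<^sub>F t in nhds 0. t * (deriv u t)\<^sup>2 + u t * deriv u t - 1 / 2 = 0"
  obtains r where "webu u ((deriv^^(Suc 0)) u) ((deriv^^(Suc (Suc 0))) u) ((deriv^^(Suc (Suc (Suc 0)))) u) a r"
proof -
  obtain r0 where r0: "r0 > 0" "\<And>t. \<bar>t\<bar> < r0 \<Longrightarrow> (u has_real_derivative (deriv^^(Suc 0)) u t) (at t)"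
    "\<And>t. \<bar>t\<bar> < r0 \<Longrightarrow> ((deriv^^(Suc 0)) u has_real_derivative (deriv^^(Suc (Suc 0))) u t) (at t)"
    "\<And>t. \<bar>t\<bar> < r0 \<Longrightarrow> ((deriv^^(Suc (Suc 0))) u has_real_derivative (deriv^^(Suc (Suc (Suc 0)))) u t) (at t)"
    using smooth3[OF an] by blast
  obtain r1 where r1: "r1 > 0" "\<And>t. dist t 0 < r1 \<Longrightarrow> t * (deriv u t)\<^sup>2 + u t * deriv u t - 1 / 2 = 0"
    using ode unfolding eventually_nhds_metric by blast
  define r where "r = min r0 r1"
  show ?thesis
  proof (rule that, unfold_locales)
    show "a \<noteq> 0" "u 0 = a" "r > 0" using a u0 r0 r1 by (auto simp: r_def)
    fix t assume t: "\<bar>t\<bar> < r"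
    then have t0: "\<bar>t\<bar> < r0" and t1: "dist t 0 < r1" by (auto simp: r_def dist_real_def)
    show "(u has_real_derivative (deriv^^(Suc 0)) u t) (at t)" using r0(2)[OF t0] .
    show "((deriv^^(Suc 0)) u has_real_derivative (deriv^^(Suc (Suc 0))) u t) (at t)" using r0(3)[OF t0] .
    show "((deriv^^(Suc (Suc 0))) u has_real_derivative (deriv^^(Suc (Suc (Suc 0)))) u t) (at t)" using r0(4)[OF t0] .
    show "t * ((deriv^^(Suc 0)) u t)\<^sup>2 + u t * (deriv^^(Suc 0)) u t = 1/2" using r1(2)[OF t1] by simp
  qed
qed

context webu begin

lemma tends_f: "((\<lambda>p. web_f u p) \<longlongrightarrow> 0) (nhds (0,0))"
  and tends_g: "((\<lambda>p. web_g u p) \<longlongrightarrow> 0) (nhds (0,0))"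
proof -
  have t1: "((\<lambda>p::real\<times>real. fst p * snd p) \<longlongrightarrow> 0) (nhds (0, 0))"
    using tendsto_mult[OF tendsto_fst[OF filterlim_ident] tendsto_snd[OF filterlim_ident], of "(0::real,0::real)"]
    by simp
  have t2: "((\<lambda>p. u (fst p * snd p)) \<longlongrightarrow> u 0) (nhds (0,0))"
    using isCont_tendsto_compose[OF DERIV_isCont[OF du[of 0]] t1] r by simp
  have tf: "((\<lambda>p::real\<times>real. fst p) \<longlongrightarrow> 0) (nhds (0, 0))"
    using tendsto_fst[OF filterlim_ident, of "(0::real,0::real)"] by simp
  have ts: "((\<lambda>p::real\<times>real. snd p) \<longlongrightarrow> 0) (nhds (0, 0))"
    using tendsto_snd[OF filterlim_ident, of "(0::real,0::real)"] by simp
  have "((\<lambda>p. fst p ^ 3 / 6 + snd p + fst p * u (fst p * snd p)) \<longlongrightarrow> 0 ^ 3 / 6 + 0 + 0 * u 0) (nhds (0,0))"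
    by (intro tendsto_intros t2 tf ts) simp
  then show "((\<lambda>p. web_f u p) \<longlongrightarrow> 0) (nhds (0,0))" by (simp add: web_f_def[abs_def])
  have "((\<lambda>p. fst p ^ 3 / 6 + snd p - fst p * u (fst p * snd p)) \<longlongrightarrow> 0 ^ 3 / 6 + 0 - 0 * u 0) (nhds (0,0))"
    by (intro tendsto_intros t2 tf ts) simp
  then show "((\<lambda>p. web_g u p) \<longlongrightarrow> 0) (nhds (0,0))" by (simp add: web_g_def[abs_def])
qed

lemma ev_lt: "((\<lambda>p. h p) \<longlongrightarrow> 0) (nhds (0::real,0::real)) \<Longrightarrow> e > 0 \<Longrightarrow> \<forall>\<^sub>F p in nhds (0,0). \<bar>h p\<bar> < (e::real)"
  using tendstoD by fastforce

end

context webu begin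

lemma us_vals: "fst (0::real,0::real) = 0" "snd (0::real,0::real) = 0" "web_f u (0,0) = 0" "web_g u (0,0) = 0"
  by (simp_all add: web_f_def web_g_def)

lemma psi_rel: "abelian_relation [fst, snd, web_f u, web_g u]
             [\<lambda>s. s ^ 3 / 3, \<lambda>s. 2 * s, \<lambda>s. - s, \<lambda>s. - s] (0, 0)"
proof -
  have an: "real_analytic_at (\<lambda>s. s ^ 3 / 3) 0" "real_analytic_at (\<lambda>s. 2 * s) 0" "real_analytic_at (\<lambda>s. - s) 0"
    using analytic_monom[of "1/3" 3] analytic_monom[of 2 1] analytic_monom[of "-1" 1] by simp_all
  have sum: "(\<Sum>i<length [fst, snd, web_f u, web_g u].
      ([\<lambda>s. s ^ 3 / 3, \<lambda>s. 2 * s, \<lambda>s. - s, \<lambda>s. - s] ! i) (([fst, snd, web_f u, web_g u] ! i) q)) = 0" for q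
    by (simp add: sum4 web_f_def web_g_def)
  have c2: "\<forall>i<length [fst, snd, web_f u, web_g u]. real_analytic_at ([\<lambda>s. s ^ 3 / 3, \<lambda>s. 2 * s, \<lambda>s. - s, \<lambda>s. - s] ! i) (([fst, snd, web_f u, web_g u] ! i) (0, 0)) \<and>
         ([\<lambda>s. s ^ 3 / 3, \<lambda>s. 2 * s, \<lambda>s. - s, \<lambda>s. - s] ! i) (([fst, snd, web_f u, web_g u] ! i) (0, 0)) = 0"
  proof (intro allI impI)
    fix i assume "i < length [fst, snd, web_f u, web_g u]"
    then have "i = 0 \<or> i = 1 \<or> i = 2 \<or> i = 3" by auto
    then show "real_analytic_at ([\<lambda>s. s ^ 3 / 3, \<lambda>s. 2 * s, \<lambda>s. - s, \<lambda>s. - s] ! i) (([fst, snd, web_f u, web_g u] ! i) (0, 0)) \<and>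
         ([\<lambda>s. s ^ 3 / 3, \<lambda>s. 2 * s, \<lambda>s. - s, \<lambda>s. - s] ! i) (([fst, snd, web_f u, web_g u] ! i) (0, 0)) = 0"
      using an us_vals by auto
  qed
  have c3: "\<forall>\<^sub>F q in nhds (0,0). (\<Sum>i<length [fst, snd, web_f u, web_g u].
      ([\<lambda>s. s ^ 3 / 3, \<lambda>s. 2 * s, \<lambda>s. - s, \<lambda>s. - s] ! i) (([fst, snd, web_f u, web_g u] ! i) q)) = 0"
    using sum by simp
  show ?thesis unfolding abelian_relation_def using c2 c3 by simp
qed

lemma psi_nontriv: "\<not> trivial_relation [fst, snd, web_f u, web_g u]
             [\<lambda>s. s ^ 3 / 3, \<lambda>s. 2 * s, \<lambda>s. - s, \<lambda>s. - s] (0, 0)"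
proof
  assume "trivial_relation [fst, snd, web_f u, web_g u]
             [\<lambda>s. s ^ 3 / 3, \<lambda>s. 2 * s, \<lambda>s. - s, \<lambda>s. - s] (0, 0)"
  then have "\<forall>\<^sub>F s in nhds (([fst, snd, web_f u, web_g u] ! 1) (0,0)). ([\<lambda>s. s ^ 3 / 3, \<lambda>s. 2 * s, \<lambda>s. - s, \<lambda>s. - s] ! 1) s = 0"
    unfolding trivial_relation_def by (drule_tac x=1 in spec) simp
  then have "\<forall>\<^sub>F s in nhds (0::real). 2 * s = 0" by simp
  then obtain d where d: "d > 0" "\<And>s. dist s 0 < d \<Longrightarrow> 2 * s = (0::real)"
    unfolding eventually_nhds_metric by blast
  then show False using d(2)[of "d/2"] by simp
qed

end

context webu begin

lemma rank1: "web_rank_one [fst, snd, web_f u, web_g u] (0,0)"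
  unfolding web_rank_one_def
proof (intro exI[of _ "[\<lambda>s. s ^ 3 / 3, \<lambda>s. 2 * s, \<lambda>s. - s, \<lambda>s. - s]"] conjI psi_rel psi_nontriv allI impI)
  fix \<phi>s assume AR: "abelian_relation [fst, snd, web_f u, web_g u] \<phi>s (0,0)"
  have L: "length [fst, snd, web_f u, web_g u] = 4" by simp
  have us0: "([fst, snd, web_f u, web_g u] ! i) (0,0) = 0" if "i < 4" for i
    using less4[OF that] us_vals by auto
  have all: "\<forall>i<length [fst, snd, web_f u, web_g u]. real_analytic_at (\<phi>s ! i) (([fst, snd, web_f u, web_g u] ! i) (0,0)) \<and>
      (\<phi>s ! i) (([fst, snd, web_f u, web_g u] ! i) (0,0)) = 0"
    using AR unfolding abelian_relation_def by blast
  have h: "real_analytic_at (\<phi>s!i) 0 \<and> (\<phi>s!i) 0 = 0" if "i < 4" for i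
  proof -
    have "i < length [fst, snd, web_f u, web_g u]" using L that by simp
    from all[rule_format, OF this] show ?thesis unfolding us0[OF that] .
  qed
  have EV: "\<forall>\<^sub>F q in nhds (0,0). (\<phi>s!0) (fst q) + (\<phi>s!1) (snd q) + (\<phi>s!2) (web_f u q) + (\<phi>s!3) (web_g u q) = 0"
    using AR unfolding abelian_relation_def by (simp add: sum4 numeral_2_eq_2 numeral_3_eq_3)
  define \<phi>1 where "\<phi>1 = \<phi>s!0"
  define \<phi>2 where "\<phi>2 = \<phi>s!1"
  define \<phi>3 where "\<phi>3 = \<phi>s!2"
  define \<phi>4 where "\<phi>4 = \<phi>s!3"
  obtain \<rho>1 where r1: "\<rho>1 > 0" "\<And>t. \<bar>t\<bar> < \<rho>1 \<Longrightarrow> (\<phi>1 has_real_derivative (deriv^^(Suc 0)) \<phi>1 t) (at t)"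
    "\<And>t. \<bar>t\<bar> < \<rho>1 \<Longrightarrow> ((deriv^^(Suc 0)) \<phi>1 has_real_derivative (deriv^^(Suc (Suc 0))) \<phi>1 t) (at t)"
    "\<And>t. \<bar>t\<bar> < \<rho>1 \<Longrightarrow> ((deriv^^(Suc (Suc 0))) \<phi>1 has_real_derivative (deriv^^(Suc (Suc (Suc 0)))) \<phi>1 t) (at t)"
    using smooth3[of \<phi>1] h[of 0] unfolding \<phi>1_def by auto
  obtain \<rho>3 where r3: "\<rho>3 > 0" "\<And>t. \<bar>t\<bar> < \<rho>3 \<Longrightarrow> (\<phi>3 has_real_derivative (deriv^^(Suc 0)) \<phi>3 t) (at t)"
    "\<And>t. \<bar>t\<bar> < \<rho>3 \<Longrightarrow> ((deriv^^(Suc 0)) \<phi>3 has_real_derivative (deriv^^(Suc (Suc 0))) \<phi>3 t) (at t)"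
    "\<And>t. \<bar>t\<bar> < \<rho>3 \<Longrightarrow> ((deriv^^(Suc (Suc 0))) \<phi>3 has_real_derivative (deriv^^(Suc (Suc (Suc 0)))) \<phi>3 t) (at t)"
    using smooth3[of \<phi>3] h[of 2] unfolding \<phi>3_def by auto
  obtain \<rho>4 where r4: "\<rho>4 > 0" "\<And>t. \<bar>t\<bar> < \<rho>4 \<Longrightarrow> (\<phi>4 has_real_derivative (deriv^^(Suc 0)) \<phi>4 t) (at t)"
    "\<And>t. \<bar>t\<bar> < \<rho>4 \<Longrightarrow> ((deriv^^(Suc 0)) \<phi>4 has_real_derivative (deriv^^(Suc (Suc 0))) \<phi>4 t) (at t)"
    "\<And>t. \<bar>t\<bar> < \<rho>4 \<Longrightarrow> ((deriv^^(Suc (Suc 0))) \<phi>4 has_real_derivative (deriv^^(Suc (Suc (Suc 0)))) \<phi>4 t) (at t)"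
    using smooth3[of \<phi>4] h[of 3] unfolding \<phi>4_def by auto
  define \<rho> where "\<rho> = min \<rho>1 (min \<rho>3 \<rho>4)"
  have rho: "\<rho> > 0" using r1 r3 r4 by (simp add: \<rho>_def)
  have tf: "((\<lambda>p::real\<times>real. fst p) \<longlongrightarrow> 0) (nhds (0, 0))"
    using tendsto_fst[OF filterlim_ident, of "(0::real,0::real)"] by simp
  have "\<forall>\<^sub>F p in nhds (0,0). (\<phi>1 (fst p) + \<phi>2 (snd p) + \<phi>3 (web_f u p) + \<phi>4 (web_g u p) = 0)
      \<and> \<bar>web_f u p\<bar> < \<rho> \<and> \<bar>web_g u p\<bar> < \<rho> \<and> \<bar>fst p\<bar> < \<rho> \<and> \<bar>fst p * snd p\<bar> < r"
    using eventually_conj[OF EV eventually_conj[OF ev_lt[OF tends_f rho]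
        eventually_conj[OF ev_lt[OF tends_g rho] eventually_conj[OF ev_lt[OF tf rho] ev_small]]]]
    unfolding \<phi>1_def \<phi>2_def \<phi>3_def \<phi>4_def by simp
  then obtain e where e: "e > 0" "\<And>x y. \<bar>x\<bar> < e \<Longrightarrow> \<bar>y\<bar> < e \<Longrightarrow>
      (\<phi>1 x + \<phi>2 y + \<phi>3 (web_f u (x,y)) + \<phi>4 (web_g u (x,y)) = 0)
      \<and> \<bar>web_f u (x,y)\<bar> < \<rho> \<and> \<bar>web_g u (x,y)\<bar> < \<rho> \<and> \<bar>x\<bar> < \<rho> \<and> \<bar>x * y\<bar> < r"
    by (rule ev_box) auto
  have RK: "rk u u1 u2 u3 a r \<phi>1 ((deriv^^(Suc 0)) \<phi>1) ((deriv^^(Suc (Suc 0))) \<phi>1) ((deriv^^(Suc (Suc (Suc 0)))) \<phi>1)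
     \<phi>2 \<phi>3 ((deriv^^(Suc 0)) \<phi>3) ((deriv^^(Suc (Suc 0))) \<phi>3) ((deriv^^(Suc (Suc (Suc 0)))) \<phi>3)
     \<phi>4 ((deriv^^(Suc 0)) \<phi>4) ((deriv^^(Suc (Suc 0))) \<phi>4) ((deriv^^(Suc (Suc (Suc 0)))) \<phi>4) \<rho> e"
    unfolding rk_def rk_axioms_def
  proof (intro conjI webu_axioms rho e(1) allI impI)
    show "\<phi>1 0 = 0" "\<phi>2 0 = 0" "\<phi>3 0 = 0" "\<phi>4 0 = 0"
      using h[of 0] h[of 1] h[of 2] h[of 3] unfolding \<phi>1_def \<phi>2_def \<phi>3_def \<phi>4_def by auto
  qed (use r1 r3 r4 e(2) in \<open>auto simp: \<rho>_def\<close>)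
  obtain K \<delta> where Kd: "\<delta> > 0" "\<And>s. \<bar>s\<bar> < \<delta> \<Longrightarrow> \<phi>1 s = K * (s^3/3) \<and> \<phi>2 s = K * (2 * s) \<and> \<phi>3 s = K * (- s) \<and> \<phi>4 s = K * (- s)"
    using rk.rank_final[OF RK] by blast
  have ev: "\<forall>\<^sub>F s in nhds (0::real). \<bar>s\<bar> < \<delta>"
    unfolding eventually_nhds_metric using Kd(1) by (auto simp: dist_real_def)
  show "\<exists>c. \<forall>i<length [fst, snd, web_f u, web_g u].
            \<forall>\<^sub>F s in nhds (([fst, snd, web_f u, web_g u] ! i) (0, 0)).
               (\<phi>s ! i) s = c * ([\<lambda>s. s ^ 3 / 3, \<lambda>s. 2 * s, \<lambda>s. - s, \<lambda>s. - s] ! i) s"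
  proof (intro exI[of _ K] allI impI)
    fix i assume "i < length [fst, snd, web_f u, web_g u]"
    then have "i = 0 \<or> i = 1 \<or> i = 2 \<or> i = 3" by auto
    then show "\<forall>\<^sub>F s in nhds (([fst, snd, web_f u, web_g u] ! i) (0, 0)).
               (\<phi>s ! i) s = K * ([\<lambda>s. s ^ 3 / 3, \<lambda>s. 2 * s, \<lambda>s. - s, \<lambda>s. - s] ! i) s"
    proof (elim disjE)
      assume "i = 0" then show ?thesis using ev Kd(2) us_vals unfolding \<phi>1_def
        by (auto elim!: eventually_mono)
    next
      assume "i = 1" then show ?thesis using ev Kd(2) us_vals unfolding \<phi>2_def
        by (auto elim!: eventually_mono)
    next
      assume "i = 2" then show ?thesis using ev Kd(2) us_vals unfolding \<phi>3_def
        by (auto elim!: eventually_mono)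
    next
      assume "i = 3" then show ?thesis using ev Kd(2) us_vals unfolding \<phi>4_def
        by (auto elim!: eventually_mono)
    qed
  qed
qed

end


theorem mainTheorem5:
  fixes a :: real
  assumes "a \<noteq> 0"
  shows "(\<exists>u. real_analytic_at u 0 \<and> u 0 = a \<and>
            (\<forall>\<^sub>F t in nhds 0. t * (deriv u t)\<^sup>2 + u t * deriv u t - 1 / 2 = 0))
       \<and> (\<forall>u. real_analytic_at u 0 \<and> u 0 = a \<and>
            (\<forall>\<^sub>F t in nhds 0. t * (deriv u t)\<^sup>2 + u t * deriv u t - 1 / 2 = 0) \<longrightarrow>
          (\<forall>\<^sub>F p in nhds (0, 0).
              Dx (web_f u) p * Dy (web_g u) p + Dx (web_g u) p * Dy (web_f u) p = 0)
        \<and> blaschke_curvature fst snd (web_f u) (0, 0) \<noteq> 0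
        \<and> \<not> hexagonal_at fst snd (web_f u) (0, 0)
        \<and> \<not> hexagonal_at fst snd (web_g u) (0, 0)
        \<and> \<not> hexagonal_at fst (web_f u) (web_g u) (0, 0)
        \<and> \<not> hexagonal_at snd (web_f u) (web_g u) (0, 0)
        \<and> abelian_relation [fst, snd, web_f u, web_g u]
             [\<lambda>s. s ^ 3 / 3, \<lambda>s. 2 * s, \<lambda>s. - s, \<lambda>s. - s] (0, 0)
        \<and> \<not> trivial_relation [fst, snd, web_f u, web_g u]
             [\<lambda>s. s ^ 3 / 3, \<lambda>s. 2 * s, \<lambda>s. - s, \<lambda>s. - s] (0, 0)
        \<and> web_rank_one [fst, snd, web_f u, web_g u] (0, 0))"
proof (intro conjI allI impI)
  show "\<exists>u. real_analytic_at u 0 \<and> u 0 = a \<and>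
            (\<forall>\<^sub>F t in nhds 0. t * (deriv u t)\<^sup>2 + u t * deriv u t - 1 / 2 = 0)"
    using exists_solution[OF assms] .
next
  fix u assume H: "real_analytic_at u 0 \<and> u 0 = a \<and>
            (\<forall>\<^sub>F t in nhds 0. t * (deriv u t)\<^sup>2 + u t * deriv u t - 1 / 2 = 0)"
  obtain r where W: "webu u ((deriv^^(Suc 0)) u) ((deriv^^(Suc (Suc 0))) u) ((deriv^^(Suc (Suc (Suc 0)))) u) a r"
    using for_u[OF assms] H by blast
  have nz: "1 / a^2 \<noteq> 0" using assms by simp
  show "\<forall>\<^sub>F p in nhds (0, 0).
              Dx (web_f u) p * Dy (web_g u) p + Dx (web_g u) p * Dy (web_f u) p = 0"
    using webu.cross_ratio[OF W] .
  show "blaschke_curvature fst snd (web_f u) (0, 0) \<noteq> 0"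
    using webu.curv_fsf[OF W] nz by simp
  show "\<not> hexagonal_at fst snd (web_f u) (0, 0)"
    using webu.curv_fsf[OF W] nz not_hex by simp
  show "\<not> hexagonal_at fst snd (web_g u) (0, 0)"
    using webu.curv_fsg[OF W] nz not_hex by simp
  show "\<not> hexagonal_at fst (web_f u) (web_g u) (0, 0)"
    using webu.curv_ffg[OF W] nz not_hex by simp
  show "\<not> hexagonal_at snd (web_f u) (web_g u) (0, 0)"
    using webu.curv_sfg[OF W] nz not_hex by simp
  show "abelian_relation [fst, snd, web_f u, web_g u]
             [\<lambda>s. s ^ 3 / 3, \<lambda>s. 2 * s, \<lambda>s. - s, \<lambda>s. - s] (0, 0)"
    using webu.psi_rel[OF W] .
  show "\<not> trivial_relation [fst, snd, web_f u, web_g u]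
             [\<lambda>s. s ^ 3 / 3, \<lambda>s. 2 * s, \<lambda>s. - s, \<lambda>s. - s] (0, 0)"
    using webu.psi_nontriv[OF W] .
  show "web_rank_one [fst, snd, web_f u, web_g u] (0, 0)"
    using webu.rank1[OF W] .
qed


end
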